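(* Let $\mathcal{X}$ be a finite set with $|\mathcal{X}|=r\geq 2$, let $P_X$ be a probability mass function on $\mathcal{X}$ with $P_X(x)>0$ for all $x\in\mathcal{X}$, let $\mathcal{Z}=\{0,1,\ldots,k-1\}$ with $2\leq k\leq r$, let $f:\mathcal{X}\to\mathcal{Z}$ be a given mapping, and fix an integer list size $l$ with $1\leq l<r$. Let $\pi^{(l)}(\rho)$ denote list $\rho$-privacy and $\Lambda_\rho$ the set defined in the context. Then: (i) For $0\leq\rho\leq 1/k$, $\pi^{(l)}(\rho)=1-P_X(L_l^* )$. (ii) For $\rho=1$, $\pi^{(l)}(1)=1-\sum_{i\in\mathcal{Z}} P_X\big([f^{-1}(i)]_{\min\{l,|f^{-1}(i)|\}}\big)$. (iii) For $0\leq\rho\leq 1$, $$\pi^{(l)}(\rho)\leq \pi_u^{(l)}(\rho):=1-\Big[P_X(\Lambda_\rho)+\rho\sum_{i\in\mathcal{Z}}P_X\big([f^{-1}(i)\setminus\Lambda_\rho]_{\min\{l-|\Lambda_\rho|,\,|f^{-1}(i)\setminus\Lambda_\rho|\}}\big)\Big].$$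
   Context: Notation: $f^{-1}(i)=\{x\in\mathcal{X}: f(x)=i\}$. For $A\subseteq\mathcal{X}$ and $0\leq t\leq|A|$, $[A]_t$ denotes a set of $t$ largest $P_X$-probability elements of $A$ (ties broken arbitrarily), with $[A]_0=\emptyset$; $L_t^*=[\mathcal{X}]_t$. For a set $S$, $P_X(S)=\sum_{x\in S}P_X(x)$. A $\rho$-recoverable query response ($\rho$-QR), for $0\leq\rho\leq 1$, is a stochastic matrix $W:\mathcal{X}\to\mathcal{Z}$ (i.e. $W(i|x)\geq 0$, $\sum_{i\in\mathcal{Z}}W(i|x)=1$) with $W(f(x)|x)\geq\rho$ for all $x\in\mathcal{X}$; equivalently a $\mathcal{Z}$-valued random variable $F(X)$ with $P(F(X)=i\mid X=x)=W(i|x)$, where $X\sim P_X$. Let $\mathcal{L}_l$ be the set of all $l$-element subsets of $\mathcal{X}$. The list privacy of a $\rho$-QR $W$ is $\pi^{(l)}_\rho(W)=\min_{g}P(X\notin g(F(X)))$, the minimum over all maps $g:\mathcal{Z}\to\mathcal{L}_l$; equivalently $\pi^{(l)}_\rho(W)=1-\sum_{i\in\mathcal{Z}}\max_{L\in\mathcal{L}_l}\sum_{x\in L}P_X(x)W(i|x)$. List $\rho$-privacy is $\pi^{(l)}(\rho)=\max\{\pi^{(l)}_\rho(W): W \text{ a } \rho\text{-QR}\}$. For $0\leq\rho\leq1$, $\Lambda_\rho$ denotes a maximizer (not necessarily unique) over subsets $\Lambda\subset\mathcal{X}$ with $0\leq|\Lambda|\leq l$ of $$P_X(\Lambda)+\rho\sum_{i\in\mathcal{Z}}P_X\big([f^{-1}(i)\setminus\Lambda]_{\min\{l-|\Lambda|,\,|f^{-1}(i)\setminus\Lambda|\}}\big).$$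 *)

theory Defs
  imports Complex_Main
begin

definition is_top_set :: "('a \<Rightarrow> real) \<Rightarrow> 'a set \<Rightarrow> nat \<Rightarrow> 'a set \<Rightarrow> bool" where
  "is_top_set P A t S \<longleftrightarrow> S \<subseteq> A \<and> card S = t \<and> (\<forall>x\<in>S. \<forall>y\<in>A - S. P y \<le> P x)"

text \<open>[A]_t, ties broken arbitrarily (via choice).\<close>
definition top_set :: "('a \<Rightarrow> real) \<Rightarrow> 'a set \<Rightarrow> nat \<Rightarrow> 'a set" where
  "top_set P A t = (SOME S. is_top_set P A t S)"

definition mass :: "('a \<Rightarrow> real) \<Rightarrow> 'a set \<Rightarrow> real" where
  "mass P S = (\<Sum>x\<in>S. P x)"

definition preimg :: "'a set \<Rightarrow> ('a \<Rightarrow> nat) \<Rightarrow> nat \<Rightarrow> 'a set" where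
  "preimg X f i = {x \<in> X. f x = i}"

text \<open>rho-recoverable query response: W x i = W(i|x), Z = {0..<k}.\<close>
definition is_QR :: "'a set \<Rightarrow> nat \<Rightarrow> ('a \<Rightarrow> nat) \<Rightarrow> real \<Rightarrow> ('a \<Rightarrow> nat \<Rightarrow> real) \<Rightarrow> bool" where
  "is_QR X k f \<rho> W \<longleftrightarrow>
     (\<forall>x\<in>X. (\<forall>i<k. 0 \<le> W x i) \<and> (\<Sum>i<k. W x i) = 1 \<and> \<rho> \<le> W x (f x))"

definition list_priv_W :: "'a set \<Rightarrow> ('a \<Rightarrow> real) \<Rightarrow> nat \<Rightarrow> nat \<Rightarrow> ('a \<Rightarrow> nat \<Rightarrow> real) \<Rightarrow> real" where
  "list_priv_W X P k l W =
     1 - (\<Sum>i<k. Max ((\<lambda>L. \<Sum>x\<in>L. P x * W x i) ` {L. L \<subseteq> X \<and> card L = l}))"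

text \<open>List rho-privacy: the maximum (= supremum, which is attained) over all rho-QRs.\<close>
definition list_priv :: "'a set \<Rightarrow> ('a \<Rightarrow> real) \<Rightarrow> nat \<Rightarrow> ('a \<Rightarrow> nat) \<Rightarrow> nat \<Rightarrow> real \<Rightarrow> real" where
  "list_priv X P k f l \<rho> = Sup {list_priv_W X P k l W | W. is_QR X k f \<rho> W}"

text \<open>Objective maximized by Lambda_rho.\<close>
definition lambda_obj :: "'a set \<Rightarrow> ('a \<Rightarrow> real) \<Rightarrow> nat \<Rightarrow> ('a \<Rightarrow> nat) \<Rightarrow> nat \<Rightarrow> real \<Rightarrow> 'a set \<Rightarrow> real" where
  "lambda_obj X P k f l \<rho> \<Lambda> =
     mass P \<Lambda> + \<rho> * (\<Sum>i<k. mass P (top_set P (preimg X f i - \<Lambda>)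
                         (min (l - card \<Lambda>) (card (preimg X f i - \<Lambda>)))))"

end

theory Submission
  imports Defs
begin

lemma top_exists:
  assumes "finite A" "t \<le> card A"
  shows "\<exists>S. is_top_set P A t S"
  using assms(2)
proof (induction t)
  case 0
  then show ?case by (auto simp: is_top_set_def intro!: exI[of _ "{}"])
next
  case (Suc t)
  then obtain S where S: "is_top_set P A t S" by auto
  hence SA: "S \<subseteq> A" "card S = t" by (auto simp: is_top_set_def)
  have fS: "finite S" using SA assms(1) finite_subset by auto
  have "card (A - S) > 0" using Suc.prems SA fS assms(1) by (simp add: card_Diff_subset)
  hence ne: "A - S \<noteq> {}" by (simp add: card_gt_0_iff)
  have fin: "finite (A - S)" using assms(1) by auto
  obtain y where y: "y \<in> A - S" "\<forall>z\<in>A - S. P z \<le> P y"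
  proof -
    have "Max (P ` (A - S)) \<in> P ` (A - S)" using fin ne by (intro Max_in) auto
    then obtain y where "y \<in> A - S" "P y = Max (P ` (A - S))" by auto
    moreover have "\<forall>z\<in>A - S. P z \<le> Max (P ` (A - S))" using fin by auto
    ultimately show ?thesis using that by auto
  qed
  have "is_top_set P A (Suc t) (insert y S)"
    unfolding is_top_set_def
  proof (intro conjI)
    show "insert y S \<subseteq> A" using y SA by auto
    show "card (insert y S) = Suc t" using y SA fS by auto
    show "\<forall>x\<in>insert y S. \<forall>z\<in>A - insert y S. P z \<le> P x"
      using y S unfolding is_top_set_def by auto
  qed
  then show ?case by blast
qed

lemma top_set_is:
  assumes "finite A" "t \<le> card A"
  shows "is_top_set P A t (top_set P A t)"
  unfolding top_set_def using top_exists[OF assms] by (rule someI_ex)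

lemma top_max_eq:
  assumes S: "is_top_set P A t S" and fA: "finite A" and L: "L \<subseteq> A" "card L = t"
  shows "mass P L \<le> mass P S"
proof -
  have SA: "S \<subseteq> A" "card S = t" "\<forall>x\<in>S. \<forall>y\<in>A - S. P y \<le> P x" using S by (auto simp: is_top_set_def)
  have fS: "finite S" and fL: "finite L" using SA L fA finite_subset by auto
  have e1: "mass P L = sum P (L \<inter> S) + sum P (L - S)" unfolding mass_def using fL sum.Int_Diff by blast
  have e2: "mass P S = sum P (L \<inter> S) + sum P (S - L)" unfolding mass_def using fS sum.Int_Diff
    by (metis Int_commute)
  have c1: "card L = card (L \<inter> S) + card (L - S)" using fL by (metis card_Int_Diff)
  have c2: "card S = card (L \<inter> S) + card (S - L)" using fS by (metis card_Int_Diff Int_commute)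
  have cc: "card (L - S) = card (S - L)" using c1 c2 L SA by simp
  have "sum P (L - S) \<le> sum P (S - L)"
  proof (cases "S - L = {}")
    case True
    then have "L - S = {}" using cc fL by (metis card_0_eq finite_Diff card.empty)
    then show ?thesis using True by simp
  next
    case False
    define c where "c = Min (P ` (S - L))"
    have fSL: "finite (S - L)" using fS by auto
    have "sum P (L - S) \<le> (\<Sum>y\<in>L - S. c)"
    proof (rule sum_mono)
      fix y assume y: "y \<in> L - S"
      have "c \<in> P ` (S - L)" unfolding c_def using False fSL by (intro Min_in) auto
      then obtain x where "x \<in> S - L" "c = P x" by auto
      then show "P y \<le> c" using SA(3) y L by auto
    qed
    also have "\<dots> = card (S - L) * c" using cc by simp
    also have "\<dots> = (\<Sum>x\<in>S - L. c)" by simp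
    also have "\<dots> \<le> sum P (S - L)"
      by (rule sum_mono) (use fSL in \<open>auto simp: c_def\<close>)
    finally show ?thesis .
  qed
  then show ?thesis using e1 e2 by simp
qed

lemma top_max:
  assumes S: "is_top_set P A t S" and fA: "finite A" and nn: "\<forall>x\<in>A. P x \<ge> 0"
    and L: "L \<subseteq> A" "card L \<le> t"
  shows "mass P L \<le> mass P S"
proof -
  have "t \<le> card A" using S fA by (metis is_top_set_def card_mono)
  then obtain L' where L': "L \<subseteq> L'" "L' \<subseteq> A" "card L' = t"
    using exists_subset_between[of L t A] L fA by auto
  have "mass P L \<le> mass P L'" unfolding mass_def
    using L' nn fA by (intro sum_mono2) (auto intro: finite_subset)
  also have "\<dots> \<le> mass P S" using top_max_eq[OF S fA L'(2,3)] .
  finally show ?thesis .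
qed


lemma finite_Ls: "finite X \<Longrightarrow> finite {L. L \<subseteq> X \<and> card L = l}"
  by (rule finite_subset[of _ "Pow X"]) auto

lemma main_bound:
  assumes fX: "finite X" and Ppos: "\<forall>x\<in>X. P x > 0" and fk: "\<forall>x\<in>X. f x < k"
    and lX: "l \<le> card X" and W: "is_QR X k f \<rho> W" and r0: "0 \<le> \<rho>"
    and La: "\<Lambda> \<subseteq> X" "card \<Lambda> \<le> l"
  shows "lambda_obj X P k f l \<rho> \<Lambda> \<le>
     (\<Sum>i<k. Max ((\<lambda>L. \<Sum>x\<in>L. P x * W x i) ` {L. L \<subseteq> X \<and> card L = l}))"
proof -
  have Wnn: "\<And>x i. x \<in> X \<Longrightarrow> i < k \<Longrightarrow> 0 \<le> W x i" and Ws: "\<And>x. x \<in> X \<Longrightarrow> (\<Sum>i<k. W x i) = 1"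
    and Wr: "\<And>x. x \<in> X \<Longrightarrow> \<rho> \<le> W x (f x)" using W by (auto simp: is_QR_def)
  have fLa: "finite \<Lambda>" using La fX finite_subset by auto
  define T where "T i = top_set P (preimg X f i - \<Lambda>) (min (l - card \<Lambda>) (card (preimg X f i - \<Lambda>)))" for i
  have step: "(\<Sum>x\<in>\<Lambda>. P x * W x i) + \<rho> * mass P (T i)
      \<le> Max ((\<lambda>L. \<Sum>x\<in>L. P x * W x i) ` {L. L \<subseteq> X \<and> card L = l})" if i: "i < k" for i
  proof -
    let ?A = "preimg X f i - \<Lambda>"
    have fA: "finite ?A" using fX by (auto simp: preimg_def)
    have Tt: "is_top_set P ?A (min (l - card \<Lambda>) (card ?A)) (T i)"
      unfolding T_def by (rule top_set_is[OF fA]) simp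
    have TA: "T i \<subseteq> ?A" and cT: "card (T i) \<le> l - card \<Lambda>" using Tt by (auto simp: is_top_set_def)
    have TX: "T i \<subseteq> X" using TA by (auto simp: preimg_def)
    have fT: "finite (T i)" using TX fX finite_subset by auto
    have disj: "\<Lambda> \<inter> T i = {}" using TA by auto
    have cU: "card (\<Lambda> \<union> T i) \<le> l" using card_Un_le[of \<Lambda> "T i"] cT La by linarith
    obtain L where L: "\<Lambda> \<union> T i \<subseteq> L" "L \<subseteq> X" "card L = l"
      using exists_subset_between[OF cU lX _ fX] La TX by auto
    have nn: "\<And>x. x \<in> X \<Longrightarrow> 0 \<le> P x * W x i" using Ppos Wnn[OF _ i] by (simp add: less_imp_le)
    have "(\<Sum>x\<in>\<Lambda>. P x * W x i) + \<rho> * mass P (T i) = (\<Sum>x\<in>\<Lambda>. P x * W x i) + (\<Sum>x\<in>T i. \<rho> * P x)"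
      by (simp add: mass_def sum_distrib_left)
    also have "\<dots> \<le> (\<Sum>x\<in>\<Lambda>. P x * W x i) + (\<Sum>x\<in>T i. P x * W x i)"
    proof -
      have "(\<Sum>x\<in>T i. \<rho> * P x) \<le> (\<Sum>x\<in>T i. P x * W x i)"
      proof (rule sum_mono)
        fix x assume x: "x \<in> T i"
        hence "x \<in> X" "f x = i" using TA by (auto simp: preimg_def)
        hence "\<rho> \<le> W x i" using Wr by auto
        thus "\<rho> * P x \<le> P x * W x i" using Ppos \<open>x \<in> X\<close>
          by (simp add: mult.commute mult_left_mono less_imp_le)
      qed
      thus ?thesis by simp
    qed
    also have "\<dots> = (\<Sum>x\<in>\<Lambda> \<union> T i. P x * W x i)" by (rule sum.union_disjoint[OF fLa fT disj, symmetric])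
    also have "\<dots> \<le> (\<Sum>x\<in>L. P x * W x i)"
      using L nn fX by (intro sum_mono2) (auto intro: finite_subset)
    also have "\<dots> \<le> Max ((\<lambda>L. \<Sum>x\<in>L. P x * W x i) ` {L. L \<subseteq> X \<and> card L = l})"
      using L by (intro Max_ge finite_imageI finite_Ls fX) auto
    finally show ?thesis .
  qed
  have "lambda_obj X P k f l \<rho> \<Lambda> = (\<Sum>i<k. (\<Sum>x\<in>\<Lambda>. P x * W x i)) + (\<Sum>i<k. \<rho> * mass P (T i))"
  proof -
    have "(\<Sum>i<k. (\<Sum>x\<in>\<Lambda>. P x * W x i)) = (\<Sum>x\<in>\<Lambda>. P x * (\<Sum>i<k. W x i))"
      by (simp add: sum.swap[of _ "{..<k}"] sum_distrib_left)
    also have "\<dots> = mass P \<Lambda>" using Ws La by (simp add: mass_def subset_iff)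
    finally show ?thesis by (simp add: lambda_obj_def T_def sum_distrib_left)
  qed
  also have "\<dots> = (\<Sum>i<k. (\<Sum>x\<in>\<Lambda>. P x * W x i) + \<rho> * mass P (T i))" by (simp add: sum.distrib)
  also have "\<dots> \<le> (\<Sum>i<k. Max ((\<lambda>L. \<Sum>x\<in>L. P x * W x i) ` {L. L \<subseteq> X \<and> card L = l}))"
    by (rule sum_mono) (use step in auto)
  finally show ?thesis .
qed


lemma top_set_0: "finite A \<Longrightarrow> top_set P A 0 = {}"
proof -
  assume fA: "finite A"
  have "is_top_set P A 0 (top_set P A 0)" using top_set_is[of A 0 P] fA by simp
  hence "top_set P A 0 \<subseteq> A" "card (top_set P A 0) = 0" by (auto simp: is_top_set_def)
  thus ?thesis using fA by (meson card_0_eq finite_subset)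
qed

lemma part_ii_W:
  assumes fX: "finite X" and Ppos: "\<forall>x\<in>X. P x > 0" and fk: "\<forall>x\<in>X. f x < k"
    and lX: "l \<le> card X"
    and W: "\<And>x i. x \<in> X \<Longrightarrow> i < k \<Longrightarrow> W x i = (if i = f x then 1 else 0)"
  shows "list_priv_W X P k l W =
            1 - (\<Sum>i<k. mass P (top_set P (preimg X f i) (min l (card (preimg X f i)))))"
proof -
  have "Max ((\<lambda>L. \<Sum>x\<in>L. P x * W x i) ` {L. L \<subseteq> X \<and> card L = l})
        = mass P (top_set P (preimg X f i) (min l (card (preimg X f i))))" if i: "i < k" for i
  proof -
    let ?A = "preimg X f i"
    let ?T = "top_set P ?A (min l (card ?A))"
    have fA: "finite ?A" using fX by (auto simp: preimg_def)
    have Tt: "is_top_set P ?A (min l (card ?A)) ?T" by (rule top_set_is[OF fA]) simp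
    have TA: "?T \<subseteq> ?A" and cT: "card ?T \<le> l" using Tt by (auto simp: is_top_set_def)
    have TX: "?T \<subseteq> X" using TA by (auto simp: preimg_def)
    have nnA: "\<forall>x\<in>?A. P x \<ge> 0" using Ppos by (auto simp: preimg_def less_imp_le)
    have eq: "(\<Sum>x\<in>L. P x * W x i) = mass P {x\<in>L. f x = i}" if L: "L \<subseteq> X" for L
    proof -
      have fL: "finite L" using L fX finite_subset by auto
      have "(\<Sum>x\<in>L. P x * W x i) = (\<Sum>x\<in>L. if f x = i then P x else 0)"
        using L W[OF _ i] by (intro sum.cong) auto
      also have "\<dots> = mass P {x\<in>L. f x = i}" unfolding mass_def using sum.inter_filter[OF fL, of P "\<lambda>x. f x = i"] by simp
      finally show ?thesis .
    qed
    have le: "mass P {x\<in>L. f x = i} \<le> mass P ?T" if L: "L \<subseteq> X" "card L = l" for L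
    proof (rule top_max[OF Tt fA nnA])
      show "{x\<in>L. f x = i} \<subseteq> ?A" using L by (auto simp: preimg_def)
      have fL: "finite L" using L fX finite_subset by auto
      have "card {x\<in>L. f x = i} \<le> card L" using fL by (intro card_mono) auto
      moreover have "card {x\<in>L. f x = i} \<le> card ?A" using fA L by (intro card_mono) (auto simp: preimg_def)
      ultimately show "card {x\<in>L. f x = i} \<le> min l (card ?A)" using L by simp
    qed
    obtain L where L: "?T \<subseteq> L" "L \<subseteq> X" "card L = l"
      using exists_subset_between[OF cT lX TX fX] by auto
    have fL: "finite L" using L fX finite_subset by auto
    have "mass P ?T \<le> mass P {x\<in>L. f x = i}" unfolding mass_def
      using L TA nnA fL by (intro sum_mono2) (auto simp: preimg_def)
    hence att: "(\<Sum>x\<in>L. P x * W x i) = mass P ?T" using le[OF L(2,3)] eq[OF L(2)] by simp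
    show ?thesis
    proof (rule Max_eqI)
      show "finite ((\<lambda>L. \<Sum>x\<in>L. P x * W x i) ` {L. L \<subseteq> X \<and> card L = l})"
        using fX by (intro finite_imageI finite_Ls)
      show "y \<le> mass P ?T" if "y \<in> (\<lambda>L. \<Sum>x\<in>L. P x * W x i) ` {L. L \<subseteq> X \<and> card L = l}" for y
        using that le eq by auto
      show "mass P ?T \<in> (\<lambda>L. \<Sum>x\<in>L. P x * W x i) ` {L. L \<subseteq> X \<and> card L = l}"
        using att L by (auto intro!: image_eqI[of _ _ L])
    qed
  qed
  then show ?thesis unfolding list_priv_W_def by simp
qed

theorem theorem1:
  fixes X :: "'a set" and P :: "'a \<Rightarrow> real" and k l :: nat and f :: "'a \<Rightarrow> nat"
  assumes "finite X" and "card X \<ge> 2"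
    and "\<forall>x\<in>X. P x > 0" and "(\<Sum>x\<in>X. P x) = 1"
    and "2 \<le> k" and "k \<le> card X"
    and "\<forall>x\<in>X. f x < k"
    and "1 \<le> l" and "l < card X"
  shows "(\<forall>\<rho>::real. 0 \<le> \<rho> \<and> \<rho> \<le> 1 / real k \<longrightarrow>
            list_priv X P k f l \<rho> = 1 - mass P (top_set P X l))
       \<and> list_priv X P k f l 1 =
            1 - (\<Sum>i<k. mass P (top_set P (preimg X f i) (min l (card (preimg X f i)))))
       \<and> (\<forall>(\<rho>::real) \<Lambda>. 0 \<le> \<rho> \<and> \<rho> \<le> 1 \<and> \<Lambda> \<subseteq> X \<and> card \<Lambda> \<le> l
            \<and> (\<forall>\<Lambda>'. \<Lambda>' \<subseteq> X \<and> card \<Lambda>' \<le> l \<longrightarrow>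
                   lambda_obj X P k f l \<rho> \<Lambda>' \<le> lambda_obj X P k f l \<rho> \<Lambda>)
            \<longrightarrow> list_priv X P k f l \<rho> \<le> 1 - lambda_obj X P k f l \<rho> \<Lambda>)"
proof -
  note fX = assms(1) and Ppos = assms(3) and fk = assms(7)
  have lX: "l \<le> card X" using assms(9) by simp
  have kpos: "k > 0" using assms(5) by simp
  define Wi where "Wi x i = (if i = f x then 1 else 0 :: real)" for x i
  have Wi_QR: "is_QR X k f \<rho> Wi" if "\<rho> \<le> 1" for \<rho>
    unfolding is_QR_def Wi_def using that fk
    by (auto simp: sum.delta)
  have bound: "list_priv_W X P k l W \<le> 1 - lambda_obj X P k f l \<rho> \<Lambda>"
    if W: "is_QR X k f \<rho> W" and r: "0 \<le> \<rho>" and La: "\<Lambda> \<subseteq> X" "card \<Lambda> \<le> l" for W \<rho> \<Lambda>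
    using main_bound[OF fX Ppos fk lX W r La] unfolding list_priv_W_def by simp
  have P3: "list_priv X P k f l \<rho> \<le> 1 - lambda_obj X P k f l \<rho> \<Lambda>"
    if r: "0 \<le> \<rho>" "\<rho> \<le> 1" and La: "\<Lambda> \<subseteq> X" "card \<Lambda> \<le> l" for \<rho> \<Lambda>
    unfolding list_priv_def
    by (rule cSup_least) (use Wi_QR[OF r(2)] bound[OF _ r(1) La] in auto)
  have P1: "list_priv X P k f l \<rho> = 1 - mass P (top_set P X l)"
    if r: "0 \<le> \<rho>" "\<rho> \<le> 1 / real k" for \<rho>
  proof -
    let ?S = "top_set P X l"
    have St: "is_top_set P X l ?S" by (rule top_set_is[OF fX lX])
    hence SX: "?S \<subseteq> X" "card ?S = l" by (auto simp: is_top_set_def)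
    have lo: "lambda_obj X P k f l \<rho> ?S = mass P ?S"
      unfolding lambda_obj_def using SX fX
      by (simp add: top_set_0 preimg_def mass_def)
    define W0 where "W0 x i = 1 / real k" for x :: 'a and i :: nat
    have W0: "is_QR X k f \<rho> W0" unfolding is_QR_def W0_def using r kpos by auto
    have mx: "Max ((\<lambda>L. \<Sum>x\<in>L. P x * W0 x i) ` {L. L \<subseteq> X \<and> card L = l}) = mass P ?S / real k" for i
    proof (rule Max_eqI)
      show "finite ((\<lambda>L. \<Sum>x\<in>L. P x * W0 x i) ` {L. L \<subseteq> X \<and> card L = l})"
        using fX by (intro finite_imageI finite_Ls)
      show "y \<le> mass P ?S / real k" if yin: "y \<in> (\<lambda>L. \<Sum>x\<in>L. P x * W0 x i) ` {L. L \<subseteq> X \<and> card L = l}" for y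
      proof -
        obtain L where L: "L \<subseteq> X" "card L = l" "y = (\<Sum>x\<in>L. P x * W0 x i)" using yin by auto
        have "y = mass P L / real k" using L(3) by (simp add: W0_def mass_def sum_divide_distrib)
        moreover have "mass P L \<le> mass P ?S" by (rule top_max_eq[OF St fX L(1,2)])
        ultimately show ?thesis using kpos by (simp add: divide_right_mono)
      qed
      show "mass P ?S / real k \<in> (\<lambda>L. \<Sum>x\<in>L. P x * W0 x i) ` {L. L \<subseteq> X \<and> card L = l}"
        using SX by (auto simp: W0_def mass_def sum_divide_distrib intro!: image_eqI[of _ _ ?S])
    qed
    have v: "list_priv_W X P k l W0 = 1 - mass P ?S"
      unfolding list_priv_W_def mx using kpos by simp
    show ?thesis unfolding list_priv_def
    proof (rule cSup_eq_maximum)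
      show "1 - mass P ?S \<in> {list_priv_W X P k l W |W. is_QR X k f \<rho> W}" using v W0 by (metis (mono_tags, lifting) mem_Collect_eq)
      show "y \<le> 1 - mass P ?S" if "y \<in> {list_priv_W X P k l W |W. is_QR X k f \<rho> W}" for y
        using that bound[OF _ r(1) SX(1)] SX(2) lo by auto
    qed
  qed
  have P2: "list_priv X P k f l 1 =
            1 - (\<Sum>i<k. mass P (top_set P (preimg X f i) (min l (card (preimg X f i)))))"
    unfolding list_priv_def
  proof (rule cSup_eq_maximum)
    show "1 - (\<Sum>i<k. mass P (top_set P (preimg X f i) (min l (card (preimg X f i)))))
           \<in> {list_priv_W X P k l W |W. is_QR X k f 1 W}"
      using Wi_QR[of 1] part_ii_W[OF fX Ppos fk lX, of Wi] unfolding Wi_def by (smt (verit, best) mem_Collect_eq)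
    show "y \<le> 1 - (\<Sum>i<k. mass P (top_set P (preimg X f i) (min l (card (preimg X f i)))))"
      if yin: "y \<in> {list_priv_W X P k l W |W. is_QR X k f 1 W}" for y
    proof -
      obtain W where W: "is_QR X k f 1 W" "y = list_priv_W X P k l W" using yin by auto
      have "W x i = (if i = f x then 1 else 0)" if x: "x \<in> X" and i: "i < k" for x i
      proof -
        have nn: "\<And>j. j < k \<Longrightarrow> 0 \<le> W x j" and s: "(\<Sum>j<k. W x j) = 1" and g: "1 \<le> W x (f x)"
          using W(1) x by (auto simp: is_QR_def)
        have fx: "f x \<in> {..<k}" using fk x by auto
        have sp: "(\<Sum>j<k. W x j) = W x (f x) + (\<Sum>j\<in>{..<k} - {f x}. W x j)"
          using sum.remove[OF _ fx] by simp
        have z: "(\<Sum>j\<in>{..<k} - {f x}. W x j) = 0"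
        proof -
          have "0 \<le> (\<Sum>j\<in>{..<k} - {f x}. W x j)" using nn by (intro sum_nonneg) auto
          thus ?thesis using sp s g by linarith
        qed
        have "\<forall>j\<in>{..<k} - {f x}. W x j = 0"
          using sum_nonneg_eq_0_iff[of "{..<k} - {f x}" "W x"] z nn by auto
        moreover have "W x (f x) = 1" using sp s z by linarith
        ultimately show ?thesis using i by auto
      qed
      then show ?thesis using W(2) part_ii_W[OF fX Ppos fk lX, of W] by simp
    qed
  qed
  show ?thesis using P1 P2 P3 by blast
qed

end
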